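(* Let $G$ be a graph, let $R\subseteq V(G)$ be such that $G[R]$ is isomorphic to $F$, and let $C\subseteq V(G)\setminus R$ be a clique in $G$ with $m$ vertices. Then one can admissibly remove from $G$ a subset of $C\cup R$ such that the remaining vertices of $C\cup R$ form a clique with at most $\max(m-1,2)$ vertices.
   Context: $F$ denotes the disjoint union of two vertex-disjoint copies of the complete bipartite graph $K_{5,5}$ (so $F$ has $20$ vertices). Removing a set $T$ of vertices from a graph $G$ is a simple admissible removal if $T$ is an independent set in $G$ and the number of edges between $T$ and $V(G)\setminus T$ is even. Removing a (not necessarily independent) set of vertices is admissible if it can be realised by a sequence of simple admissible removals, each performed in the graph remaining after the previous ones. *)

theory Defs
  imports Main
begin

definition graph :: "'a set \<Rightarrow> ('a \<Rightarrow> 'a \<Rightarrow> bool) \<Rightarrow> bool" where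
  "graph V E \<longleftrightarrow> finite V \<and> (\<forall>x y. E x y \<longrightarrow> E y x) \<and> (\<forall>x. \<not> E x x)
     \<and> (\<forall>x y. E x y \<longrightarrow> x \<in> V \<and> y \<in> V)"

definition independent :: "'a set \<Rightarrow> ('a \<Rightarrow> 'a \<Rightarrow> bool) \<Rightarrow> 'a set \<Rightarrow> bool" where
  "independent V E T \<longleftrightarrow> T \<subseteq> V \<and> (\<forall>x\<in>T. \<forall>y\<in>T. \<not> E x y)"

definition clique :: "'a set \<Rightarrow> ('a \<Rightarrow> 'a \<Rightarrow> bool) \<Rightarrow> 'a set \<Rightarrow> bool" where
  "clique V E C \<longleftrightarrow> C \<subseteq> V \<and> (\<forall>x\<in>C. \<forall>y\<in>C. x \<noteq> y \<longrightarrow> E x y)"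

definition cut_edges :: "'a set \<Rightarrow> ('a \<Rightarrow> 'a \<Rightarrow> bool) \<Rightarrow> 'a set \<Rightarrow> nat" where
  "cut_edges V E T = card {(x, y). x \<in> T \<and> y \<in> V - T \<and> E x y}"

definition simple_adm_removal :: "'a set \<Rightarrow> ('a \<Rightarrow> 'a \<Rightarrow> bool) \<Rightarrow> 'a set \<Rightarrow> bool" where
  "simple_adm_removal V E T \<longleftrightarrow> independent V E T \<and> even (cut_edges V E T)"

text \<open>Admissible removal: a sequence of simple admissible removals, each in the graph
  induced on the remaining vertices (the edge relation restricted to V is the induced graph).\<close>
inductive adm_removal :: "'a set \<Rightarrow> ('a \<Rightarrow> 'a \<Rightarrow> bool) \<Rightarrow> 'a set \<Rightarrow> bool" where
  adm_empty: "adm_removal V E {}"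
| adm_step: "simple_adm_removal V E T \<Longrightarrow> adm_removal (V - T) E X \<Longrightarrow> adm_removal V E (T \<union> X)"

text \<open>The graph F: two disjoint copies of K_{5,5} on vertices 0..19.
  Vertex i lies in copy i div 10, on side (i mod 10 < 5).\<close>
definition F_V :: "nat set" where "F_V = {0..<20}"

definition F_E :: "nat \<Rightarrow> nat \<Rightarrow> bool" where
  "F_E i j \<longleftrightarrow> i \<in> F_V \<and> j \<in> F_V \<and> i div 10 = j div 10 \<and> (i mod 10 < 5) \<noteq> (j mod 10 < 5)"

definition induced_iso_F :: "'a set \<Rightarrow> ('a \<Rightarrow> 'a \<Rightarrow> bool) \<Rightarrow> 'a set \<Rightarrow> bool" where
  "induced_iso_F V E R \<longleftrightarrow> R \<subseteq> V \<and>
     (\<exists>f. bij_betw f R F_V \<and> (\<forall>x\<in>R. \<forall>y\<in>R. E x y \<longleftrightarrow> F_E (f x) (f y)))"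

end

theory Submission imports Defs begin

definition dg :: "'a set \<Rightarrow> ('a \<Rightarrow> 'a \<Rightarrow> bool) \<Rightarrow> 'a \<Rightarrow> nat" where
  "dg W E x = card {y\<in>W. E x y}"

definition ecnt :: "('a \<Rightarrow> 'a \<Rightarrow> bool) \<Rightarrow> 'a set \<Rightarrow> 'a set \<Rightarrow> nat" where
  "ecnt E A B = card {(x,y). x\<in>A \<and> y\<in>B \<and> E x y}"

definition Phi :: "'a set \<Rightarrow> ('a \<Rightarrow> 'a \<Rightarrow> bool) \<Rightarrow> 'a set \<Rightarrow> nat" where
  "Phi W E X = 2 * (\<Sum>x\<in>X. dg W E x) + ecnt E X X"

lemma ecnt_sum:
  assumes "finite A" "finite B"
  shows "ecnt E A B = (\<Sum>x\<in>A. card {y\<in>B. E x y})"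
proof -
  have "{(x,y). x\<in>A \<and> y\<in>B \<and> E x y} = Sigma A (\<lambda>x. {y\<in>B. E x y})" by auto
  thus ?thesis unfolding ecnt_def using assms by (simp add: card_SigmaI)
qed

lemma dg_split:
  assumes "finite W" "X \<subseteq> W"
  shows "dg W E x = dg (W - X) E x + card {y\<in>X. E x y}"
proof -
  have "{y\<in>W. E x y} = {y\<in>W-X. E x y} \<union> {y\<in>X. E x y}" using assms by auto
  moreover have "finite {y\<in>W-X. E x y}" "finite {y\<in>X. E x y}" using assms finite_subset[of _ W] by auto
  ultimately show ?thesis unfolding dg_def by (simp add: card_Un_disjoint disjoint_iff)
qed

lemma ecnt_sym:
  assumes "\<And>x y. E x y \<Longrightarrow> E y x"
  shows "ecnt E A B = ecnt E B A"
proof -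
  have "{(x,y). x\<in>B \<and> y\<in>A \<and> E x y} = prod.swap ` {(x,y). x\<in>A \<and> y\<in>B \<and> E x y}"
    using assms by (auto simp: image_iff)
  moreover have "inj prod.swap" by simp
  ultimately show ?thesis unfolding ecnt_def by (simp add: card_image inj_on_def)
qed

lemma ecnt_Un1:
  assumes "finite A" "finite B" "finite D" "A \<inter> B = {}"
  shows "ecnt E (A \<union> B) D = ecnt E A D + ecnt E B D"
  using assms by (simp add: ecnt_sum sum.union_disjoint)

lemma ecnt_Un2:
  assumes "finite A" "finite B" "finite D" "A \<inter> B = {}"
  shows "ecnt E D (A \<union> B) = ecnt E D A + ecnt E D B"
proof -
  have "\<And>x. {y\<in>A\<union>B. E x y} = {y\<in>A. E x y} \<union> {y\<in>B. E x y}" by auto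
  moreover have "\<And>x. card ({y\<in>A. E x y} \<union> {y\<in>B. E x y}) = card {y\<in>A. E x y} + card {y\<in>B. E x y}"
    using assms by (intro card_Un_disjoint) auto
  ultimately show ?thesis using assms by (simp add: ecnt_sum sum.distrib)
qed

lemma Phi_split:
  assumes sym: "\<And>x y. E x y \<Longrightarrow> E y x" and fin: "finite W" and XY: "X \<subseteq> Y" and YW: "Y \<subseteq> W"
  shows "Phi W E Y = Phi W E X + Phi (W - X) E (Y - X) + 4 * ecnt E (Y - X) X"
proof -
  let ?Z = "Y - X"
  have fY: "finite Y" using fin YW finite_subset by auto
  have fX: "finite X" using fY XY finite_subset by auto
  have fZ: "finite ?Z" using fY by auto
  have Yeq: "Y = X \<union> ?Z" using XY by auto
  have dis: "X \<inter> ?Z = {}" by auto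
  have s1: "(\<Sum>x\<in>Y. dg W E x) = (\<Sum>x\<in>X. dg W E x) + (\<Sum>x\<in>?Z. dg W E x)"
    by (subst Yeq, rule sum.union_disjoint) (use fX fZ dis in auto)
  have s2: "(\<Sum>x\<in>?Z. dg W E x) = (\<Sum>x\<in>?Z. dg (W - X) E x) + ecnt E ?Z X"
    using dg_split[OF fin, of X E] XY YW fin fX fZ by (simp add: ecnt_sum sum.distrib)
  have e1: "ecnt E Y Y = ecnt E X X + ecnt E X ?Z + ecnt E ?Z X + ecnt E ?Z ?Z"
  proof -
    have "ecnt E Y Y = ecnt E X Y + ecnt E ?Z Y" by (subst (1) Yeq, rule ecnt_Un1) (use fX fZ fY dis in auto)
    also have "ecnt E X Y = ecnt E X X + ecnt E X ?Z" by (subst (1) Yeq, rule ecnt_Un2) (use fX fZ fY dis in auto)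
    also have "ecnt E ?Z Y = ecnt E ?Z X + ecnt E ?Z ?Z" by (subst (1) Yeq, rule ecnt_Un2) (use fX fZ fY dis in auto)
    finally show ?thesis by simp
  qed
  have e2: "ecnt E X ?Z = ecnt E ?Z X" using ecnt_sym[of E] sym by blast
  show ?thesis unfolding Phi_def using s1 s2 e1 e2 by simp
qed

lemma cut_eq:
  assumes "finite W" "independent W E T"
  shows "cut_edges W E T = (\<Sum>x\<in>T. dg W E x)"
proof -
  have T: "T \<subseteq> W" "\<forall>x\<in>T. \<forall>y\<in>T. \<not> E x y" using assms(2) unfolding independent_def by auto
  have fT: "finite T" using finite_subset[OF T(1) assms(1)] .
  have "cut_edges W E T = ecnt E T (W - T)" unfolding cut_edges_def ecnt_def by simp
  also have "\<dots> = (\<Sum>x\<in>T. card {y\<in>W - T. E x y})" using fT assms(1) by (simp add: ecnt_sum)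
  also have "\<dots> = (\<Sum>x\<in>T. dg W E x)"
  proof (rule sum.cong)
    fix x assume "x \<in> T"
    hence "{y\<in>W - T. E x y} = {y\<in>W. E x y}" using T by auto
    thus "card {y\<in>W - T. E x y} = dg W E x" unfolding dg_def by simp
  qed simp
  finally show ?thesis .
qed

lemma adm_sub: "adm_removal W E X \<Longrightarrow> X \<subseteq> W"
  by (induction rule: adm_removal.induct) (auto simp: simple_adm_removal_def independent_def)

lemma adm_Phi:
  shows "adm_removal W E X \<Longrightarrow> finite W \<Longrightarrow> (\<And>x y. E x y \<Longrightarrow> E y x) \<Longrightarrow> Phi W E X mod 4 = 0"
proof (induction rule: adm_removal.induct)
  case (adm_empty V E)
  then show ?case by (simp add: Phi_def ecnt_def)
next
  case (adm_step V E T X)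
  have ind: "independent V E T" and ev: "even (cut_edges V E T)"
    using adm_step.hyps(1) unfolding simple_adm_removal_def by auto
  have TV: "T \<subseteq> V" using ind unfolding independent_def by auto
  have XV: "X \<subseteq> V - T" using adm_sub[OF adm_step.hyps(2)] .
  have IH: "Phi (V - T) E X mod 4 = 0" using adm_step.IH adm_step.prems by simp
  have sp: "Phi V E (T \<union> X) = Phi V E T + Phi (V - T) E ((T \<union> X) - T) + 4 * ecnt E ((T \<union> X) - T) T"
    by (rule Phi_split) (use adm_step.prems TV XV in auto)
  have eq: "(T \<union> X) - T = X" using XV by auto
  have "{(x, y). x \<in> T \<and> y \<in> T \<and> E x y} = {}" using ind unfolding independent_def by auto
  hence e0: "ecnt E T T = 0" unfolding ecnt_def by (metis card.empty)
  have c: "(\<Sum>x\<in>T. dg V E x) = cut_edges V E T" using cut_eq[OF adm_step.prems(1) ind] by simp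
  have "Phi V E T = 2 * cut_edges V E T" unfolding Phi_def using e0 c by simp
  hence "Phi V E T mod 4 = 0" using ev by (auto elim!: evenE)
  thus ?case using sp eq IH by presburger
qed

lemma adm_trans:
  "adm_removal W E X \<Longrightarrow> adm_removal (W - X) E Y \<Longrightarrow> adm_removal W E (X \<union> Y)"
proof (induction arbitrary: Y rule: adm_removal.induct)
  case (adm_empty V E)
  then show ?case by simp
next
  case (adm_step V E T X)
  have "V - (T \<union> X) = V - T - X" by auto
  hence "adm_removal (V - T - X) E Y" using adm_step.prems by simp
  hence "adm_removal (V - T) E (X \<union> Y)" using adm_step.IH by simp
  hence "adm_removal V E (T \<union> (X \<union> Y))" by (rule adm_removal.adm_step[OF adm_step.hyps(1)])
  thus ?case by (simp add: Un_assoc)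
qed

lemma adm_single: "simple_adm_removal W E T \<Longrightarrow> adm_removal W E T"
  using adm_removal.adm_step[OF _ adm_removal.adm_empty] by fastforce

lemma rem1:
  assumes irr: "\<And>x. \<not> E x x" and fin: "finite W" and v: "v \<in> W" and ev: "even (dg W E v)"
  shows "adm_removal W E {v}"
proof -
  have ind: "independent W E {v}" using irr v unfolding independent_def by auto
  have "cut_edges W E {v} = dg W E v" using cut_eq[OF fin ind] by simp
  thus ?thesis using ind ev by (intro adm_single) (simp add: simple_adm_removal_def)
qed

lemma rem2:
  assumes sym: "\<And>x y. E x y \<Longrightarrow> E y x" and irr: "\<And>x. \<not> E x x" and fin: "finite W"
    and v: "v \<in> W" "u \<in> W" "u \<noteq> v" "\<not> E u v" and ev: "odd (dg W E v)" "odd (dg W E u)"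
  shows "adm_removal W E {u, v}"
proof -
  have ind: "independent W E {u, v}" using irr v sym unfolding independent_def by auto
  have "cut_edges W E {u, v} = dg W E u + dg W E v" using cut_eq[OF fin ind] v by simp
  thus ?thesis using ind ev by (intro adm_single) (simp add: simple_adm_removal_def)
qed

lemma dg_rem1:
  assumes fin: "finite W" and v: "v \<in> W"
  shows "dg W E x = dg (W - {v}) E x + (if E x v then 1 else 0)"
proof -
  have "dg W E x = dg (W - {v}) E x + card {y\<in>{v}. E x y}" using dg_split[OF fin, of "{v}"] v by simp
  moreover have "{y\<in>{v}. E x y} = (if E x v then {v} else {})" by auto
  ultimately show ?thesis by simp
qed

lemma greedy:
  assumes sym: "\<And>x y. E x y \<Longrightarrow> E y x" and irr: "\<And>x. \<not> E x x"
  shows "finite W \<Longrightarrow> Y \<subseteq> W \<Longrightarrow> \<exists>X\<subseteq>Y. adm_removal W E X \<and> (\<forall>x\<in>Y-X. odd (dg (W-X) E x))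
           \<and> (\<forall>x\<in>Y-X. \<forall>y\<in>Y-X. x \<noteq> y \<longrightarrow> E x y)"
proof (induction "card Y" arbitrary: W Y rule: less_induct)
  case less
  have fY: "finite Y" using less.prems finite_subset by auto
  show ?case
  proof (cases "\<exists>v\<in>Y. even (dg W E v)")
    case True
    then obtain v where v: "v \<in> Y" "even (dg W E v)" by auto
    have A: "adm_removal W E {v}" using rem1[where E=E, OF irr less.prems(1)] v less.prems(2) by auto
    have cl: "card (Y - {v}) < card Y" using fY v by (meson card_Diff1_less)
    have ex: "\<exists>X\<subseteq>Y - {v}. adm_removal (W - {v}) E X \<and> (\<forall>x\<in>Y - {v} - X. odd (dg (W - {v} - X) E x))
           \<and> (\<forall>x\<in>Y - {v} - X. \<forall>y\<in>Y - {v} - X. x \<noteq> y \<longrightarrow> E x y)"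
      using less.hyps[OF cl, of "W - {v}"] less.prems by auto
    obtain X' where X': "X' \<subseteq> Y - {v}" "adm_removal (W - {v}) E X'"
       "\<forall>x\<in>Y - {v} - X'. odd (dg (W - {v} - X') E x)"
       "\<forall>x\<in>Y - {v} - X'. \<forall>y\<in>Y - {v} - X'. x \<noteq> y \<longrightarrow> E x y"
      using ex by blast
    have e1: "Y - {v} - X' = Y - ({v} \<union> X')" "W - {v} - X' = W - ({v} \<union> X')" by auto
    show ?thesis
      proof (rule exI[of _ "{v} \<union> X'"], intro conjI)
        show "{v} \<union> X' \<subseteq> Y" using X'(1) v by auto
        show "adm_removal W E ({v} \<union> X')" using adm_trans[OF A X'(2)] .
        show "\<forall>x\<in>Y - ({v} \<union> X'). odd (dg (W - ({v} \<union> X')) E x)" using X'(3) unfolding e1 .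
        show "\<forall>x\<in>Y - ({v} \<union> X'). \<forall>y\<in>Y - ({v} \<union> X'). x \<noteq> y \<longrightarrow> E x y" using X'(4) unfolding e1 .
      qed
  next
    case False
    note F1 = False
    show ?thesis
    proof (cases "\<exists>u\<in>Y. \<exists>v\<in>Y. u \<noteq> v \<and> \<not> E u v")
      case True
      then obtain u v where uv: "u \<in> Y" "v \<in> Y" "u \<noteq> v" "\<not> E u v" by auto
      have A: "adm_removal W E {u, v}" using rem2[where E=E, OF sym irr less.prems(1)] uv less.prems(2) F1 by auto
      have cl: "card (Y - {u, v}) < card Y" by (rule psubset_card_mono) (use fY uv in auto)
      have ex: "\<exists>X\<subseteq>Y - {u, v}. adm_removal (W - {u, v}) E X \<and> (\<forall>x\<in>Y - {u, v} - X. odd (dg (W - {u, v} - X) E x))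
           \<and> (\<forall>x\<in>Y - {u, v} - X. \<forall>y\<in>Y - {u, v} - X. x \<noteq> y \<longrightarrow> E x y)"
        using less.hyps[OF cl, of "W - {u, v}"] less.prems by auto
      obtain X' where X': "X' \<subseteq> Y - {u, v}" "adm_removal (W - {u, v}) E X'"
         "\<forall>x\<in>Y - {u, v} - X'. odd (dg (W - {u, v} - X') E x)"
         "\<forall>x\<in>Y - {u, v} - X'. \<forall>y\<in>Y - {u, v} - X'. x \<noteq> y \<longrightarrow> E x y"
        using ex by blast
      have e1: "Y - {u, v} - X' = Y - ({u, v} \<union> X')" "W - {u, v} - X' = W - ({u, v} \<union> X')" by auto
      show ?thesis
        proof (rule exI[of _ "{u, v} \<union> X'"], intro conjI)
        show "{u, v} \<union> X' \<subseteq> Y" using X'(1) uv by auto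
        show "adm_removal W E ({u, v} \<union> X')" using adm_trans[OF A X'(2)] .
        show "\<forall>x\<in>Y - ({u, v} \<union> X'). odd (dg (W - ({u, v} \<union> X')) E x)" using X'(3) unfolding e1 .
        show "\<forall>x\<in>Y - ({u, v} \<union> X'). \<forall>y\<in>Y - ({u, v} \<union> X'). x \<noteq> y \<longrightarrow> E x y" using X'(4) unfolding e1 .
      qed
    next
      case False
      show ?thesis
        by (rule exI[of _ "{}"]) (use False F1 adm_removal.adm_empty in auto)
    qed
  qed
qed

lemma dg_rem2:
  assumes fin: "finite W" and ab: "a \<in> W" "b \<in> W" "a \<noteq> b"
  shows "dg W E x = dg (W - {a, b}) E x + (if E x a then 1 else 0) + (if E x b then 1 else 0)"
proof -
  have "dg W E x = dg (W - {a}) E x + (if E x a then 1 else 0)" using dg_rem1[OF fin ab(1)] .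
  moreover have "dg (W - {a}) E x = dg (W - {a} - {b}) E x + (if E x b then 1 else 0)"
    using dg_rem1[of "W - {a}" b] fin ab by auto
  moreover have "W - {a} - {b} = W - {a, b}" by auto
  ultimately show ?thesis by simp
qed

lemma stepP2:
  assumes irr: "\<And>x. \<not> E x x" and fin: "finite W" and m: "c \<in> W" "r \<in> W" "c \<noteq> r"
    and e: "E c r" "even (dg W E r)" "odd (dg W E c)"
  shows "adm_removal W E ({r} \<union> {c})"
proof -
  have A: "adm_removal W E {r}" using rem1[where E=E, OF irr fin] m e by auto
  have "dg W E c = dg (W - {r}) E c + 1" using dg_rem1[OF fin m(2), of E c] e by simp
  hence "even (dg (W - {r}) E c)" using e by simp
  hence "adm_removal (W - {r}) E {c}" using rem1[where E=E, OF irr] fin m by auto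
  thus ?thesis using adm_trans[OF A] by blast
qed

lemma stepP3:
  assumes sym: "\<And>x y. E x y \<Longrightarrow> E y x" and irr: "\<And>x. \<not> E x x" and fin: "finite W"
    and m: "c \<in> W" "r \<in> W" "c \<noteq> r"
    and e: "\<not> E c r" "odd (dg W E r)" "odd (dg W E c)"
  shows "adm_removal W E {c, r}"
  using rem2[where E=E, OF sym irr fin m(2) m(1)] m e by auto

lemma stepEdge:
  assumes sym: "\<And>x y. E x y \<Longrightarrow> E y x" and irr: "\<And>x. \<not> E x x" and fin: "finite W"
    and m: "c \<in> W" "r \<in> W" "s \<in> W" "c \<noteq> r" "c \<noteq> s" "r \<noteq> s"
    and e: "E r s" "\<not> E c r" "even (dg W E r)" "odd (dg W E c)" "E c s \<longleftrightarrow> odd (dg W E s)"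
  shows "\<exists>X\<subseteq>{c, r, s}. c \<in> X \<and> adm_removal W E X"
proof -
  have A: "adm_removal W E {r}" using rem1[where E=E, OF irr fin] m e by auto
  have fin1: "finite (W - {r})" using fin by simp
  have ds: "dg W E s = dg (W - {r}) E s + 1" using dg_rem1[OF fin m(2), of E s] e sym by auto
  have dc: "dg W E c = dg (W - {r}) E c" using dg_rem1[OF fin m(2), of E c] e by simp
  show ?thesis
  proof (cases "E c s")
    case True
    hence "even (dg (W - {r}) E s)" using e ds by simp
    hence B: "adm_removal (W - {r}) E ({s} \<union> {c})"
      using stepP2[where E=E, OF irr fin1] m e True dc sym by auto
    show ?thesis using adm_trans[OF A B] by (intro exI[of _ "{r} \<union> ({s} \<union> {c})"]) auto
  next
    case False
    hence "odd (dg (W - {r}) E s)" using e ds by simp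
    hence B: "adm_removal (W - {r}) E {c, s}"
      using stepP3[where E=E, OF sym irr fin1] m e False dc by auto
    show ?thesis using adm_trans[OF A B] by (intro exI[of _ "{r} \<union> {c, s}"]) auto
  qed
qed

lemma stepFinal:
  assumes sym: "\<And>x y. E x y \<Longrightarrow> E y x" and irr: "\<And>x. \<not> E x x" and fin: "finite W"
    and m: "c \<in> W" "u \<in> W" "w \<in> W" "u' \<in> W" "c \<noteq> u" "c \<noteq> w" "c \<noteq> u'" "u \<noteq> u'" "w \<noteq> u'"
    and e: "E u w" "\<not> E u u'" "\<not> E w u'" "E c u" "E c u'" "E c w"
       "odd (dg W E u)" "odd (dg W E u')" "odd (dg W E w)" "odd (dg W E c)"
  shows "adm_removal W E ({u, u'} \<union> ({w} \<union> {c}))"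
proof -
  have A: "adm_removal W E {u, u'}" using rem2[where E=E, OF sym irr fin] m e by auto
  have fin1: "finite (W - {u, u'})" using fin by simp
  have dw: "dg W E w = dg (W - {u, u'}) E w + 1" using dg_rem2[OF fin m(2) m(4) m(8), of E w] e sym by auto
  have dc: "dg W E c = dg (W - {u, u'}) E c + 2" using dg_rem2[OF fin m(2) m(4) m(8), of E c] e by auto
  have B: "adm_removal (W - {u, u'}) E ({w} \<union> {c})"
    by (rule stepP2[where E=E, OF irr fin1]) (use m e dw dc sym irr in auto)
  show ?thesis using adm_trans[OF A B] .
qed

lemma module:
  assumes sym: "\<And>x y. E x y \<Longrightarrow> E y x" and irr: "\<And>x. \<not> E x x" and fin: "finite W"
    and m: "c \<in> W" "u \<in> W" "w \<in> W" "u' \<in> W" "w' \<in> W"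
    and d: "c \<noteq> u" "c \<noteq> w" "c \<noteq> u'" "c \<noteq> w'" "u \<noteq> u'" "w \<noteq> u'" "u \<noteq> w'" "w \<noteq> w'"
    and e: "E u w" "E u' w'" "\<not> E u u'" "\<not> E u w'" "\<not> E w u'" "\<not> E w w'"
  shows "\<exists>X\<subseteq>{c, u, w, u', w'}. c \<in> X \<and> adm_removal W E X"
proof -
  have d2: "u \<noteq> w" "u' \<noteq> w'" using e irr by auto
  let ?M = "{u, w, u', w'}"
  have MW: "?M \<subseteq> W" using m by auto
  have cM: "c \<notin> ?M" using d by auto
  show ?thesis
  proof (cases "even (dg W E c)")
    case True
    thus ?thesis using rem1[where E=E, OF irr fin m(1)] by (intro exI[of _ "{c}"]) auto
  next
    case oc: False
    show ?thesis
    proof (cases "\<exists>r\<in>?M. E c r \<and> even (dg W E r)")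
      case True
      then obtain r where r: "r \<in> ?M" "E c r" "even (dg W E r)" by blast
      have "adm_removal W E ({r} \<union> {c})"
        by (rule stepP2[where E=E, OF irr fin]) (use r MW cM m oc in auto)
      thus ?thesis using r by (intro exI[of _ "{r} \<union> {c}"]) auto
    next
      case nP2: False
      show ?thesis
      proof (cases "\<exists>r\<in>?M. \<not> E c r \<and> odd (dg W E r)")
        case True
        then obtain r where r: "r \<in> ?M" "\<not> E c r" "odd (dg W E r)" by blast
        have "adm_removal W E {c, r}"
          by (rule stepP3[where E=E, OF sym irr fin]) (use r MW cM m oc in auto)
        thus ?thesis using r by (intro exI[of _ "{c, r}"]) auto
      next
        case nP3: False
        have H: "\<And>r. r \<in> ?M \<Longrightarrow> E c r \<longleftrightarrow> odd (dg W E r)" using nP2 nP3 by blast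
        have edge: "\<exists>X\<subseteq>{c, r, s}. c \<in> X \<and> adm_removal W E X"
          if "r \<in> ?M" "s \<in> ?M" "E r s" "\<not> E c r" for r s
        proof (rule stepEdge[where E=E, OF sym irr fin])
          show "r \<noteq> s" using that irr by auto
        qed (use that H MW cM m oc in auto)
        show ?thesis
        proof (cases "E c u \<and> E c w \<and> E c u' \<and> E c w'")
          case True
          have "adm_removal W E ({u, u'} \<union> ({w} \<union> {c}))"
            by (rule stepFinal[where E=E, OF sym irr fin]) (use True H m d e oc in auto)
          thus ?thesis by (intro exI[of _ "{u, u'} \<union> ({w} \<union> {c})"]) auto
        next
          case False
          hence "\<not> E c u \<or> \<not> E c w \<or> \<not> E c u' \<or> \<not> E c w'" by blast
          thus ?thesis
          proof (elim disjE)
            assume "\<not> E c u" thus ?thesis using edge[of u w] e by blast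
          next
            assume "\<not> E c w" thus ?thesis using edge[of w u] e sym by blast
          next
            assume "\<not> E c u'" thus ?thesis using edge[of u' w'] e by blast
          next
            assume "\<not> E c w'" thus ?thesis using edge[of w' u'] e sym by blast
          qed
        qed
      qed
    qed
  qed
qed

lemma three_elems:
  assumes "3 \<le> card A"
  shows "\<exists>a b c. a \<in> A \<and> b \<in> A \<and> c \<in> A \<and> a \<noteq> b \<and> a \<noteq> c \<and> b \<noteq> c"
proof -
  from assms obtain a B where 1: "A = insert a B" "a \<notin> B" "2 \<le> card B" "finite B"
    using card_le_Suc_iff[of 2 A] by (auto simp: numeral_3_eq_3)
  from 1 obtain b C where 2: "B = insert b C" "b \<notin> C" "1 \<le> card C" "finite C"
    using card_le_Suc_iff[of 1 B] by (auto simp: numeral_2_eq_2)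
  from 2 obtain c where "c \<in> C" by (metis card.empty ex_in_conv not_one_le_zero)
  thus ?thesis using 1 2 by blast
qed

lemma j5cases: "j < (5::nat) \<Longrightarrow> j = 0 \<or> j = 1 \<or> j = 2 \<or> j = 3 \<or> j = 4" by auto

lemma F_facts:
  assumes "j < (5::nat)"
  shows "F_E j (5+j)" "F_E (10+j) (15+j)" "\<not> F_E j (10+j)" "\<not> F_E j (15+j)"
    "\<not> F_E (5+j) (10+j)" "\<not> F_E (5+j) (15+j)"
  using j5cases[OF assms] by (elim disjE; simp add: F_E_def F_V_def)+

lemma F_tri:
  assumes "F_E a b" "F_E b c" "F_E a c"
  shows False
  using assms by (auto simp: F_E_def)

lemma removeS:
  assumes sym: "\<And>x y. E x y \<Longrightarrow> E y x" and irr: "\<And>x. \<not> E x x"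
    and rr_in: "\<And>i. i < 20 \<Longrightarrow> rr i \<in> R"
    and rr_inj: "\<And>i j. i < 20 \<Longrightarrow> j < 20 \<Longrightarrow> rr i = rr j \<Longrightarrow> i = j"
    and rr_E: "\<And>i j. i < 20 \<Longrightarrow> j < 20 \<Longrightarrow> E (rr i) (rr j) \<longleftrightarrow> F_E i j"
  shows "finite W \<Longrightarrow> S \<subseteq> W \<Longrightarrow> finite S \<Longrightarrow> card S \<le> j \<Longrightarrow> j \<le> 5 \<Longrightarrow> S \<inter> R = {}
    \<Longrightarrow> (\<forall>i<20. i mod 5 < j \<longrightarrow> rr i \<in> W)
    \<Longrightarrow> \<exists>Xs. S \<subseteq> Xs \<and> Xs \<subseteq> S \<union> rr ` {i. i < 20 \<and> i mod 5 < j} \<and> adm_removal W E Xs"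
proof (induction j arbitrary: W S)
  case 0
  then show ?case using adm_removal.adm_empty by auto
next
  case (Suc j)
  show ?case
  proof (cases "S = {}")
    case True
    then show ?thesis using adm_removal.adm_empty by (intro exI[of _ "{}"]) auto
  next
    case False
    then obtain c where c: "c \<in> S" by auto
    have j5: "j < 5" using Suc.prems by simp
    have ix: "j < 20" "5+j < 20" "10+j < 20" "15+j < 20"
         "j mod 5 < Suc j" "(5+j) mod 5 < Suc j" "(10+j) mod 5 < Suc j" "(15+j) mod 5 < Suc j"
      using j5cases[OF j5] by (elim disjE; simp)+
    have inW: "rr j \<in> W" "rr (5+j) \<in> W" "rr (10+j) \<in> W" "rr (15+j) \<in> W"
      using Suc.prems(7) ix by blast+
    have inR: "rr j \<in> R" "rr (5+j) \<in> R" "rr (10+j) \<in> R" "rr (15+j) \<in> R" using rr_in ix by auto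
    have cR: "c \<notin> R" using c Suc.prems(6) by auto
    have dd: "rr j \<noteq> rr (10+j)" "rr (5+j) \<noteq> rr (10+j)" "rr j \<noteq> rr (15+j)" "rr (5+j) \<noteq> rr (15+j)"
      using rr_inj[OF ix(1) ix(3)] rr_inj[OF ix(2) ix(3)] rr_inj[OF ix(1) ix(4)] rr_inj[OF ix(2) ix(4)] by auto
    obtain X1 where X1: "X1 \<subseteq> {c, rr j, rr (5+j), rr (10+j), rr (15+j)}" "c \<in> X1" "adm_removal W E X1"
    proof -
      have "\<exists>X\<subseteq>{c, rr j, rr (5+j), rr (10+j), rr (15+j)}. c \<in> X \<and> adm_removal W E X"
        by (rule module[where E=E, OF sym irr Suc.prems(1)])
           (use c Suc.prems(2) inW inR cR dd rr_E[of j "5+j"] rr_E[of "10+j" "15+j"]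
              rr_E[of j "10+j"] rr_E[of j "15+j"] rr_E[of "5+j" "10+j"] rr_E[of "5+j" "15+j"]
              F_facts[OF j5] ix in auto)
      thus ?thesis using that by blast
    qed
    let ?W1 = "W - X1" and ?S1 = "S - {c}"
    have X1S: "X1 \<inter> S = {c}" using X1 Suc.prems(6) inR c by auto
    have old: "\<forall>i<20. i mod 5 < j \<longrightarrow> rr i \<in> ?W1"
    proof (intro allI impI)
      fix i assume i: "i < 20" "i mod 5 < j"
      have "rr i \<in> W" using Suc.prems(7) i by auto
      moreover have "rr i \<noteq> c" using rr_in[OF i(1)] cR by auto
      moreover have "rr i \<noteq> rr k" if "k \<in> {j, 5+j, 10+j, 15+j}" for k
      proof
        assume "rr i = rr k"
        hence "i = k" using rr_inj i that ix by auto
        thus False using i that j5cases[OF j5] by (elim disjE; auto)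
      qed
      ultimately show "rr i \<in> ?W1" using X1(1) by auto
    qed
    have IH: "\<exists>Xs. ?S1 \<subseteq> Xs \<and> Xs \<subseteq> ?S1 \<union> rr ` {i. i < 20 \<and> i mod 5 < j} \<and> adm_removal ?W1 E Xs"
    proof (rule Suc.IH)
      show "card ?S1 \<le> j" using Suc.prems(3,4) c by auto
    qed (use Suc.prems X1S old in auto)
    then obtain X2 where X2: "?S1 \<subseteq> X2" "X2 \<subseteq> ?S1 \<union> rr ` {i. i < 20 \<and> i mod 5 < j}" "adm_removal ?W1 E X2"
      by blast
    have sub: "X1 \<subseteq> S \<union> rr ` {i. i < 20 \<and> i mod 5 < Suc j}"
    proof -
      have "{rr j, rr (5+j), rr (10+j), rr (15+j)} \<subseteq> rr ` {i. i < 20 \<and> i mod 5 < Suc j}"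
        using ix by blast
      thus ?thesis using X1(1) c by auto
    qed
    have "rr ` {i. i < 20 \<and> i mod 5 < j} \<subseteq> rr ` {i. i < 20 \<and> i mod 5 < Suc j}" by auto
    hence "X1 \<union> X2 \<subseteq> S \<union> rr ` {i. i < 20 \<and> i mod 5 < Suc j}" using sub X2(2) by auto
    moreover have "S \<subseteq> X1 \<union> X2" using X2(1) X1(2) by auto
    ultimately show ?thesis using adm_trans[OF X1(3) X2(3)] by blast
  qed
qed

lemma ecnt_clique:
  assumes irr: "\<And>x. \<not> E x x" and cl: "\<forall>x\<in>S. \<forall>y\<in>S. x \<noteq> y \<longrightarrow> E x y" and fin: "finite S"
  shows "ecnt E S S = card S * card S - card S"
proof -
  have eq: "{(x,y). x\<in>S \<and> y\<in>S \<and> E x y} = S \<times> S - (\<lambda>x. (x,x)) ` S" using irr cl by auto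
  have "card ((\<lambda>x. (x,x)) ` S) = card S" by (rule card_image) (auto simp: inj_on_def)
  moreover have "(\<lambda>x. (x,x)) ` S \<subseteq> S \<times> S" by auto
  ultimately show ?thesis unfolding ecnt_def eq using fin
    by (simp add: card_Diff_subset card_cartesian_product finite_imageI)
qed

lemma ecnt_even:
  assumes sym: "\<And>x y. E x y \<Longrightarrow> E y x" and irr: "\<And>x. \<not> E x x"
  shows "finite X \<Longrightarrow> even (ecnt E X X)"
proof (induction rule: finite_induct)
  case empty
  then show ?case by (simp add: ecnt_def)
next
  case (insert v X)
  have i: "insert v X = {v} \<union> X" by auto
  have "ecnt E (insert v X) (insert v X) = ecnt E {v} (insert v X) + ecnt E X (insert v X)"
    unfolding i by (rule ecnt_Un1) (use insert in auto)
  also have "ecnt E {v} (insert v X) = ecnt E {v} {v} + ecnt E {v} X"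
    unfolding i by (rule ecnt_Un2) (use insert in auto)
  also have "ecnt E X (insert v X) = ecnt E X {v} + ecnt E X X"
    unfolding i by (rule ecnt_Un2) (use insert in auto)
  also have "ecnt E {v} {v} = 0"
  proof -
    have "{(x,y). x \<in> {v} \<and> y \<in> {v} \<and> E x y} = {}" using irr by auto
    thus ?thesis unfolding ecnt_def by (metis card.empty)
  qed
  also have "ecnt E X {v} = ecnt E {v} X" using ecnt_sym[of E] sym by blast
  finally show ?case using insert by simp
qed

lemma oddclique:
  assumes irr: "\<And>x. \<not> E x x" and fin: "finite Q" and c2: "card Q \<le> 2"
    and od: "\<forall>x\<in>Q. odd (dg W E x)" and cl: "\<forall>x\<in>Q. \<forall>y\<in>Q. x \<noteq> y \<longrightarrow> E x y"
    and P: "Phi W E Q mod 4 = 0"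
  shows "Q = {}"
proof (rule ccontr)
  assume ne: "Q \<noteq> {}"
  have ec: "ecnt E Q Q = card Q * card Q - card Q" using ecnt_clique[OF irr cl fin] .
  have "card Q = 1 \<or> card Q = 2" using ne fin c2 by (cases "card Q") (auto simp: card_eq_0_iff)
  thus False
  proof
    assume "card Q = 1"
    then obtain x where x: "Q = {x}" by (auto simp: card_Suc_eq)
    have ph: "Phi W E Q = 2 * dg W E x" using ec x unfolding Phi_def by simp
    obtain k where "dg W E x = 2 * k + 1" using od x by (auto elim!: oddE)
    hence "Phi W E Q = 4 * k + 2" using ph by simp
    thus False using P by presburger
  next
    assume "card Q = 2"
    then obtain x y where x: "Q = {x, y}" "x \<noteq> y" by (auto simp: card_2_iff)
    have ph: "Phi W E Q = 2 * (dg W E x + dg W E y) + 2" using ec x unfolding Phi_def by simp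
    obtain k where k: "dg W E x = 2 * k + 1" using od x by (auto elim!: oddE)
    obtain l where l: "dg W E y = 2 * l + 1" using od x by (auto elim!: oddE)
    have "Phi W E Q = 4 * (k + l + 1) + 2" using ph k l by simp
    thus False using P by presburger
  qed
qed

lemma arL0: "a = b + c + 4 * d \<Longrightarrow> a mod 4 = 0 \<Longrightarrow> b mod 4 = 0 \<Longrightarrow> c mod 4 = (0::nat)"
  by presburger
lemma arL1: "(x + 1) mod 4 = (p + 2*g + 1) mod 4 \<Longrightarrow> (p + 2*g) mod 4 = 0 \<Longrightarrow> x mod 4 = (0::nat)"
  by presburger
lemma arL2: "(x + 2) mod 4 = (p + 2*s + 4) mod 4 \<Longrightarrow> (p + 2*s + 2) mod 4 = 0 \<Longrightarrow> x mod 4 = (0::nat)"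
  by presburger
lemma arL3: "even p \<Longrightarrow> (p + 2*a) mod 4 \<noteq> 0 \<Longrightarrow> (p+2*b) mod 4 \<noteq> 0 \<Longrightarrow> (p+2*d) mod 4 \<noteq> 0
  \<Longrightarrow> \<not> (p + 2*(a+b) + 2) mod 4 = 0 \<Longrightarrow> (x + 3) mod 4 = (p + 2*(a+b+d)+9) mod 4 \<Longrightarrow> x mod 4 = (0::nat)"
  by presburger

theorem mainTheorem8:
  fixes V :: "'a set" and E :: "'a \<Rightarrow> 'a \<Rightarrow> bool" and R C :: "'a set" and m :: nat
  assumes "graph V E"
    and "induced_iso_F V E R"
    and "C \<subseteq> V - R"
    and "clique V E C"
    and "card C = m"
  shows "\<exists>X. X \<subseteq> C \<union> R \<and> adm_removal V E X \<and>
           clique V E ((C \<union> R) - X) \<and> card ((C \<union> R) - X) \<le> max (m - 1) 2"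
proof -
  have finV: "finite V" and sym: "\<And>x y. E x y \<Longrightarrow> E y x" and irr: "\<And>x. \<not> E x x"
    using assms(1) unfolding graph_def by auto
  obtain f where RV: "R \<subseteq> V" and bij: "bij_betw f R F_V"
    and fE: "\<forall>x\<in>R. \<forall>y\<in>R. E x y \<longleftrightarrow> F_E (f x) (f y)"
    using assms(2) unfolding induced_iso_F_def by auto
  define rr where "rr = inv_into R f"
  have img: "f ` R = F_V" using bij by (simp add: bij_betw_def)
  have rr_in: "\<And>i. i < 20 \<Longrightarrow> rr i \<in> R"
    unfolding rr_def using inv_into_into[of _ f R] img by (simp add: F_V_def)
  have rr_f: "\<And>i. i < 20 \<Longrightarrow> f (rr i) = i"
    unfolding rr_def using f_inv_into_f[of _ f R] img by (simp add: F_V_def)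
  have rr_inj: "i = j" if "i < 20" "j < 20" "rr i = rr j" for i j
    using rr_f[OF that(1)] rr_f[OF that(2)] that(3) by metis
  have rr_E: "E (rr i) (rr j) \<longleftrightarrow> F_E i j" if "i < 20" "j < 20" for i j
  proof -
    have "E (rr i) (rr j) \<longleftrightarrow> F_E (f (rr i)) (f (rr j))" using bspec[OF bspec[OF fE rr_in[OF that(1)]] rr_in[OF that(2)]] .
    thus ?thesis unfolding rr_f[OF that(1)] rr_f[OF that(2)] .
  qed
  have CR: "C \<inter> R = {}" using assms(3) by auto
  have CV: "C \<subseteq> V" using assms(3) by auto
  have finR: "finite R" using finite_subset[OF RV finV] .
  have finC: "finite C" using finite_subset[OF CV finV] .
  have Ccl: "\<forall>x\<in>C. \<forall>y\<in>C. x \<noteq> y \<longrightarrow> E x y" using assms(4) unfolding clique_def by auto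
  have Tri: "card Q \<le> 2" if Q: "Q \<subseteq> R" "\<forall>x\<in>Q. \<forall>y\<in>Q. x \<noteq> y \<longrightarrow> E x y" for Q
  proof (rule ccontr)
    assume "\<not> card Q \<le> 2"
    then obtain a b c where abc: "a \<in> Q" "b \<in> Q" "c \<in> Q" "a \<noteq> b" "a \<noteq> c" "b \<noteq> c"
      using three_elems[of Q] by force
    have "F_E (f a) (f b)" "F_E (f b) (f c)" "F_E (f a) (f c)" using abc Q fE by blast+
    thus False using F_tri by blast
  qed
  have key: "\<exists>X Q. X \<subseteq> C \<union> R \<and> adm_removal V E X \<and> (C \<union> R) - X = (C - S) \<union> Q \<and> Q \<subseteq> R
      \<and> (\<forall>x\<in>Q. \<forall>y\<in>Q. x \<noteq> y \<longrightarrow> E x y) \<and> (\<forall>x\<in>Q. odd (dg (V - X) E x))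
      \<and> X \<subseteq> R \<union> S \<and> (R \<union> S) - X = Q"
    if S: "S \<subseteq> C" "card S \<le> 3" for S
  proof -
    have finS: "finite S" using finite_subset[OF S(1) finC] .
    have "\<exists>Xs. S \<subseteq> Xs \<and> Xs \<subseteq> S \<union> rr ` {i. i < 20 \<and> i mod 5 < 3} \<and> adm_removal V E Xs"
    proof (rule removeS[where E=E and rr=rr and R=R, OF sym irr rr_in rr_inj rr_E])
      show "S \<inter> R = {}" using S CR by auto
      show "\<forall>i<20. i mod 5 < 3 \<longrightarrow> rr i \<in> V" using rr_in RV by auto
    qed (use finV S CV finS in auto)
    then obtain Xs where Xs: "S \<subseteq> Xs" "Xs \<subseteq> S \<union> rr ` {i. i < 20 \<and> i mod 5 < 3}" "adm_removal V E Xs"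
      by blast
    have XsR: "Xs \<subseteq> S \<union> R" using Xs(2) rr_in by auto
    have "R - Xs \<subseteq> V - Xs" using RV by auto
    hence "\<exists>X'\<subseteq>R - Xs. adm_removal (V - Xs) E X' \<and> (\<forall>x\<in>R - Xs - X'. odd (dg (V - Xs - X') E x))
           \<and> (\<forall>x\<in>R - Xs - X'. \<forall>y\<in>R - Xs - X'. x \<noteq> y \<longrightarrow> E x y)"
      using greedy[where E=E, OF sym irr, of "V - Xs" "R - Xs"] finV by auto
    then obtain X' where X': "X' \<subseteq> R - Xs" "adm_removal (V - Xs) E X'"
      "\<forall>x\<in>R - Xs - X'. odd (dg (V - Xs - X') E x)"
      "\<forall>x\<in>R - Xs - X'. \<forall>y\<in>R - Xs - X'. x \<noteq> y \<longrightarrow> E x y" by blast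
    have e1: "V - Xs - X' = V - (Xs \<union> X')" by auto
    have g1: "Xs \<union> X' \<subseteq> C \<union> R" using XsR X'(1) S by auto
    have g2: "adm_removal V E (Xs \<union> X')" using adm_trans[OF Xs(3) X'(2)] .
    have g3: "(C \<union> R) - (Xs \<union> X') = (C - S) \<union> (R - Xs - X')" using XsR X'(1) S Xs(1) CR by auto
    have g4: "R - Xs - X' \<subseteq> R" by auto
    have g6: "\<forall>x\<in>R - Xs - X'. odd (dg (V - (Xs \<union> X')) E x)" using X'(3) unfolding e1 .
    have g7: "Xs \<union> X' \<subseteq> R \<union> S" using XsR X'(1) by auto
    have g8: "(R \<union> S) - (Xs \<union> X') = R - Xs - X'" using XsR X'(1) S Xs(1) CR by auto
    show ?thesis using g1 g2 g3 g4 X'(4) g6 g7 g8 by blast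
  qed
  show ?thesis
  proof (cases "m \<le> 3")
    case True
    then obtain X Q where XQ: "X \<subseteq> C \<union> R" "adm_removal V E X" "(C \<union> R) - X = (C - C) \<union> Q" "Q \<subseteq> R"
      "\<forall>x\<in>Q. \<forall>y\<in>Q. x \<noteq> y \<longrightarrow> E x y"
      using key[of C] assms(5) by blast
    have "card Q \<le> 2" using Tri[OF XQ(4) XQ(5)] .
    moreover have "clique V E Q" using XQ RV unfolding clique_def by auto
    ultimately show ?thesis using XQ by (intro exI[of _ X]) auto
  next
    case False
    hence m4: "4 \<le> m" by simp
    define P where "P = Phi V E R"
    define g where "g c = dg (V - R) E c" for c
    have Pev: "even P" unfolding P_def Phi_def using ecnt_even[where E=E, OF sym irr finR] by simp
    have PhiS: "(Phi V E (R \<union> S) + card S) mod 4 = (P + 2 * (\<Sum>c\<in>S. g c) + card S * card S) mod 4"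
      if S: "S \<subseteq> C" for S
    proof -
      have finS: "finite S" using finite_subset[OF S finC] .
      have sp: "Phi V E (R \<union> S) = Phi V E R + Phi (V - R) E ((R \<union> S) - R) + 4 * ecnt E ((R \<union> S) - R) R"
        by (rule Phi_split[where E=E, OF sym finV]) (use RV S CV in auto)
      have rs: "(R \<union> S) - R = S" using S CR by auto
      have ec: "ecnt E S S = card S * card S - card S"
        using ecnt_clique[where E=E, OF irr _ finS] Ccl S by blast
      have "card S \<le> card S * card S" by (cases "card S") auto
      hence ec2: "ecnt E S S + card S = card S * card S" using ec by simp
      have eq: "Phi V E (R \<union> S) + card S = (P + 2 * (\<Sum>c\<in>S. g c) + card S * card S) + 4 * ecnt E S R"
        using sp ec2 unfolding rs P_def Phi_def g_def by simp
      show ?thesis unfolding eq by simp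
    qed
    obtain S where S: "S \<subseteq> C" "S \<noteq> {}" "card S \<le> 3" "Phi V E (R \<union> S) mod 4 = 0"
    proof (cases "\<exists>c\<in>C. (P + 2 * g c) mod 4 = 0")
      case True
      then obtain c where c: "c \<in> C" "(P + 2 * g c) mod 4 = 0" by metis
      have cs: "card {c} = 1" "(\<Sum>x\<in>{c}. g x) = g c" by simp_all
      have "(Phi V E (R \<union> {c}) + 1) mod 4 = (P + 2 * g c + 1) mod 4"
        using PhiS[of "{c}"] c(1) unfolding cs by simp
      hence "Phi V E (R \<union> {c}) mod 4 = 0" using c(2) by (rule arL1)
      thus ?thesis by (intro that[of "{c}"]) (use c(1) cs(1) in simp_all)
    next
      case nc: False
      have "3 \<le> card C" using m4 assms(5) by simp
      then obtain a b d where abd: "a \<in> C" "b \<in> C" "d \<in> C" "a \<noteq> b" "a \<noteq> d" "b \<noteq> d"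
        using three_elems[of C] by blast
      have na: "(P + 2 * g a) mod 4 \<noteq> 0" "(P + 2 * g b) mod 4 \<noteq> 0" "(P + 2 * g d) mod 4 \<noteq> 0"
        using nc abd(1,2,3) by auto
      show ?thesis
      proof (cases "(P + 2 * (g a + g b) + 2) mod 4 = 0")
        case True
        have cs: "card {a, b} = 2" "(\<Sum>x\<in>{a, b}. g x) = g a + g b" using abd by simp_all
        have "(Phi V E (R \<union> {a, b}) + 2) mod 4 = (P + 2 * (g a + g b) + 4) mod 4"
          using PhiS[of "{a, b}"] abd(1,2) unfolding cs by simp
        hence "Phi V E (R \<union> {a, b}) mod 4 = 0" using True by (rule arL2)
        thus ?thesis by (intro that[of "{a, b}"]) (use abd cs(1) in simp_all)
      next
        case False
        have cs: "card {a, b, d} = 3" "(\<Sum>x\<in>{a, b, d}. g x) = g a + g b + g d" using abd by simp_all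
        have "(Phi V E (R \<union> {a, b, d}) + 3) mod 4 = (P + 2 * (g a + g b + g d) + 9) mod 4"
          using PhiS[of "{a, b, d}"] abd(1,2,3) unfolding cs by simp
        hence "Phi V E (R \<union> {a, b, d}) mod 4 = 0" using arL3[OF Pev na False] by blast
        thus ?thesis by (intro that[of "{a, b, d}"]) (use abd cs(1) in simp_all)
      qed
    qed
    obtain X Q where XQ: "X \<subseteq> C \<union> R" "adm_removal V E X" "(C \<union> R) - X = (C - S) \<union> Q" "Q \<subseteq> R"
      "\<forall>x\<in>Q. \<forall>y\<in>Q. x \<noteq> y \<longrightarrow> E x y" "\<forall>x\<in>Q. odd (dg (V - X) E x)"
      "X \<subseteq> R \<union> S" "(R \<union> S) - X = Q"
      using key[OF S(1) S(3)] by blast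
    have RSV: "R \<union> S \<subseteq> V" using RV S(1) CV by auto
    have sp: "Phi V E (R \<union> S) = Phi V E X + Phi (V - X) E ((R \<union> S) - X) + 4 * ecnt E ((R \<union> S) - X) X"
      by (rule Phi_split[where E=E, OF sym finV XQ(7) RSV])
    have spQ: "Phi V E (R \<union> S) = Phi V E X + Phi (V - X) E Q + 4 * ecnt E Q X" using sp unfolding XQ(8) .
    have PX: "Phi V E X mod 4 = 0" using adm_Phi[OF XQ(2) finV] sym by blast
    have PQ: "Phi (V - X) E Q mod 4 = 0" by (rule arL0[OF spQ S(4) PX])
    have finQ: "finite Q" using finite_subset[OF XQ(4) finR] .
    have c2: "card Q \<le> 2" using Tri[OF XQ(4) XQ(5)] .
    have Q0: "Q = {}" using oddclique[where E=E, OF irr finQ c2 XQ(6) XQ(5) PQ] .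
    have "clique V E (C - S)" using Ccl CV unfolding clique_def by auto
    moreover have "card (C - S) \<le> m - 1"
    proof -
      have "card (C - S) = m - card S" using card_Diff_subset[OF finite_subset[OF S(1) finC] S(1)] assms(5) by simp
      moreover have "card S \<ge> 1" using S(2) finite_subset[OF S(1) finC] by (simp add: Suc_le_eq card_gt_0_iff)
      ultimately show ?thesis by simp
    qed
    moreover have "(C \<union> R) - X = C - S" using XQ(3) Q0 by simp
    ultimately show ?thesis using XQ(1,2) by (intro exI[of _ X]) simp
  qed
qed

end
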